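(* Let $L^{(2)}_N$ be the number of leaves of the $B$-tree of order $5$ (i.e. $m=2$) obtained by inserting the keys $\pi(1),\dots,\pi(N)$ successively into an empty tree, where $\pi$ is a uniformly random permutation in $S_N$. Then \[ \mathbb E\big(L^{(2)}_N\big)=\frac{10(N+1)}{37}+O\big(N^{-13/2}\big)\qquad (N\to\infty). \]
   Context: A $B$-tree of order $2m+1$ is a rooted plane search tree whose nodes contain pairwise distinct keys in increasing left-to-right order (a non-leaf node with $k$ keys has $k+1$ children), every non-root node has between $m$ and $2m$ keys, the root between $1$ and $2m$, and all leaves have equal depth. Insertion: place the new key in the appropriate leaf; whenever a node has $2m+1$ keys, split it, moving the median key up into the parent and forming two nodes from the $m$ smallest and the $m$ largest keys (creating a new one-key root if the root splits). *)

theory Defs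
  imports Main "HOL-Library.Landau_Symbols" "HOL-Combinatorics.Permutations"
begin

text \<open>B-trees: a node carries its sorted key list and its list of children
  (empty list of children = leaf).\<close>
datatype 'a btree = BNode "'a list" "'a btree list"

text \<open>Result of inserting into a subtree: either a single node, or a node that
  overflowed and was split into (left part, median key, right part).\<close>
datatype 'a ins_res = Keep "'a btree" | Split "'a btree" 'a "'a btree"

definition split_node :: "nat \<Rightarrow> 'a list \<Rightarrow> 'a btree list \<Rightarrow> 'a ins_res" where
  "split_node m ks ts =
     (if length ks \<le> 2*m then Keep (BNode ks ts)
      else Split (BNode (take m ks) (take (m+1) ts)) (ks ! m)
                 (BNode (drop (m+1) ks) (drop (m+1) ts)))"

function ins :: "nat \<Rightarrow> 'a::linorder \<Rightarrow> 'a btree \<Rightarrow> 'a ins_res" where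
  "ins m x (BNode ks ts) =
     (if ts = [] then split_node m (insort x ks) []
      else (let i = length (filter (\<lambda>k. k < x) ks) in
        if i < length ts then
          (case ins m x (ts ! i) of
             Keep t \<Rightarrow> Keep (BNode ks (ts[i := t]))
           | Split l a r \<Rightarrow>
               split_node m (take i ks @ a # drop i ks) (take i ts @ l # r # drop (i+1) ts))
        else Keep (BNode ks ts)))"
  by pat_completeness auto
termination
  apply (relation "measure (\<lambda>(m, x, t). size t)")
  apply (auto dest!: nth_mem)
  by (metis le_imp_less_Suc order_refl size_list_estimation' trans_le_add2)

definition insert_key :: "nat \<Rightarrow> 'a::linorder \<Rightarrow> 'a btree \<Rightarrow> 'a btree" where
  "insert_key m x t = (case ins m x t of Keep t' \<Rightarrow> t' | Split l a r \<Rightarrow> BNode [a] [l, r])"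

definition build :: "nat \<Rightarrow> 'a::linorder list \<Rightarrow> 'a btree" where
  "build m xs = fold (insert_key m) xs (BNode [] [])"

fun leaves :: "'a btree \<Rightarrow> nat" where
  "leaves (BNode ks ts) = (if ts = [] then 1 else sum_list (map leaves ts))"

text \<open>Expected number of leaves of the B-tree of order 2m+1 built from
  \<pi>(1),...,\<pi>(N) for uniformly random \<pi> in S_N.\<close>
definition expected_leaves :: "nat \<Rightarrow> nat \<Rightarrow> real" where
  "expected_leaves m N =
     (\<Sum>\<pi>\<in>{\<pi>. \<pi> permutes {1..N}}. real (leaves (build m (map \<pi> [1..<N+1])))) / fact N"

end

theory Submission
  imports Defs "HOL-Combinatorics.Multiset_Permutations"
begin


fun merge :: "'a list list \<Rightarrow> 'a list \<Rightarrow> 'a list" where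
  "merge [] ks = []"
| "merge (f#fs) [] = f"
| "merge (f#fs) (k#ks) = f @ k # merge fs ks"

definition pre :: "'a list list \<Rightarrow> 'a list \<Rightarrow> 'a list" where
  "pre F ks = concat (map (\<lambda>(f,k). f @ [k]) (zip F ks))"

lemma merge_app: "length F1 = length ks1 \<Longrightarrow> merge (F1 @ F2) (ks1 @ ks2) = pre F1 ks1 @ merge F2 ks2"
  by (induction F1 ks1 rule: list_induct2) (auto simp: pre_def)

lemma merge_Cons_gen: "merge (f#fs) ks = f @ merge ([]#fs) ks"
  by (cases ks) auto

lemma length_merge: "length F = length ks + 1 \<Longrightarrow> length (merge F ks) = length (concat F) + length ks"
  by (induction F ks rule: merge.induct) auto

lemma set_merge: "length F = length ks + 1 \<Longrightarrow> set (merge F ks) = set (concat F) \<union> set ks"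
  by (induction F ks rule: merge.induct) auto

lemma merge_split: "length F = length ks + 1 \<Longrightarrow> i < length ks \<Longrightarrow>
  merge F ks = merge (take (i+1) F) (take i ks) @ ks!i # merge (drop (i+1) F) (drop (i+1) ks)"
proof (induction i arbitrary: F ks)
  case 0
  then show ?case by (cases F; cases ks) auto
next
  case (Suc i)
  then show ?case by (cases F; cases ks) auto
qed

lemma merge_map: "merge (map (map h) F) (map h ks) = map h (merge F ks)"
  by (induction F ks rule: merge.induct) auto

lemma merge_merge: "length ts = length ks + 1 \<Longrightarrow> (\<forall>t\<in>set ts. length (L t) = length (S t) + 1) \<Longrightarrow>
  merge (map (\<lambda>t. merge (L t) (S t)) ts) ks = merge (concat (map L ts)) (merge (map S ts) ks)"
proof (induction ks arbitrary: ts)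
  case Nil
  then show ?case by (cases ts) auto
next
  case (Cons k ks)
  then obtain t ts' where ts: "ts = t # ts'" by (cases ts) auto
  have lt: "length (L t) = length (S t) + 1" using Cons ts by auto
  define L0 where "L0 = butlast (L t)"
  define l where "l = last (L t)"
  have ne: "L t \<noteq> []" using lt by auto
  have L0: "L t = L0 @ [l]" "length L0 = length (S t)"
    using ne lt by (auto simp: L0_def l_def)
  have IH: "merge (map (\<lambda>t. merge (L t) (S t)) ts') ks = merge (concat (map L ts')) (merge (map S ts') ks)"
    using Cons ts by auto
  have "merge (L t @ concat (map L ts')) (S t @ k # merge (map S ts') ks)
      = pre L0 (S t) @ l @ k # merge (concat (map L ts')) (merge (map S ts') ks)"
    using merge_app[OF L0(2), of "l # concat (map L ts')"] L0 by simp
  moreover have "merge (L t) (S t) = pre L0 (S t) @ l"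
    using merge_app[OF L0(2), of "[l]" "[]"] L0 by simp
  ultimately show ?case using ts IH by simp
qed

lemma sum_list_map_cong: "(\<forall>x\<in>set xs. f x = g x) \<Longrightarrow> sum_list (map f xs) = sum_list (map g xs)"
  by (induction xs) auto

lemma sum_list_Suc: "sum_list (map (\<lambda>x. Suc (f x)) xs) = sum_list (map f xs) + length xs"
  by (induction xs) auto

fun lvs :: "'a btree \<Rightarrow> 'a list list" where
  "lvs (BNode ks ts) = (if ts = [] then [ks] else concat (map lvs ts))"
fun seps :: "'a btree \<Rightarrow> 'a list" where
  "seps (BNode ks ts) = (if ts = [] then [] else merge (map seps ts) ks)"
fun inord :: "'a btree \<Rightarrow> 'a list" where
  "inord (BNode ks ts) = (if ts = [] then ks else merge (map inord ts) ks)"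
fun bwf :: "'a btree \<Rightarrow> bool" where
  "bwf (BNode ks ts) = (ts = [] \<or> (length ts = length ks + 1 \<and> (\<forall>t\<in>set ts. bwf t)))"

lemma wf_lengths: "bwf t \<Longrightarrow> length (lvs t) = length (seps t) + 1 \<and> inord t = merge (lvs t) (seps t)"
proof (induction t rule: bwf.induct)
  case (1 ks ts)
  show ?case
  proof (cases "ts = []")
    case True then show ?thesis by simp
  next
    case False
    with 1 have l: "length ts = length ks + 1" and w: "\<forall>t\<in>set ts. bwf t" by auto
    have IH: "\<forall>t\<in>set ts. length (lvs t) = length (seps t) + 1 \<and> inord t = merge (lvs t) (seps t)"
      using 1 False w by auto
    have "map (\<lambda>t. length (lvs t)) ts = map (\<lambda>t. length (seps t) + 1) ts"
      using IH by (intro map_cong) auto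
    moreover have "length (concat (map lvs ts)) = sum_list (map (\<lambda>t. length (lvs t)) ts)"
      by (simp add: length_concat o_def)
    ultimately have "length (concat (map lvs ts)) = (\<Sum>t\<leftarrow>ts. length (seps t) + 1)"
      using sum_list_map_cong[of ts "\<lambda>t. length (lvs t)" "\<lambda>t. length (seps t) + 1"] IH by simp
    also have "\<dots> = length (concat (map seps ts)) + length ts"
      by (simp add: length_concat o_def sum_list_Suc)
    finally have A: "length (concat (map lvs ts)) = length (merge (map seps ts) ks) + 1"
      using length_merge[of "map seps ts" ks] l by simp
    have "map inord ts = map (\<lambda>t. merge (lvs t) (seps t)) ts"
      using IH by (intro map_cong) auto
    then have "merge (map inord ts) ks = merge (map (\<lambda>t. merge (lvs t) (seps t)) ts) ks"
      by (rule arg_cong)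
    also have "\<dots> = merge (concat (map lvs ts)) (merge (map seps ts) ks)"
      by (rule merge_merge) (use l IH in auto)
    finally show ?thesis using False A by simp
  qed
qed

lemma set_seps: "bwf t \<Longrightarrow> set (seps t) \<subseteq> set (inord t)"
  using wf_lengths[of t] set_merge[of "lvs t" "seps t"] by auto

lemma leaves_lvs: "leaves t = length (lvs t)"
proof (induction t rule: lvs.induct)
  case (1 ks ts)
  show ?case
  proof (cases "ts = []")
    case False
    then have "map leaves ts = map (\<lambda>t. length (lvs t)) ts" using 1 by (intro map_cong) auto
    then show ?thesis using False 1 sum_list_map_cong[of ts leaves "\<lambda>t. length (lvs t)"]
      by (simp add: length_concat o_def)
  qed simp
qed


lemma pre_simps[simp]: "pre [] K = []" "pre F [] = []" "pre (f#F) (k#K) = f @ k # pre F K"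
  by (auto simp: pre_def)

lemma set_pre: "length F = length K \<Longrightarrow> set (pre F K) = set (concat F) \<union> set K"
  by (induction F K rule: list_induct2) auto

lemma length_pre: "length F = length K \<Longrightarrow> length (pre F K) = length (concat F) + length K"
  by (induction F K rule: list_induct2) auto

lemma pre_snoc: "length F = length K \<Longrightarrow> pre (F @ [f]) (K @ [k]) = pre F K @ f @ [k]"
  by (induction F K rule: list_induct2) auto

lemma insort_append_less: "\<forall>a\<in>set A. \<not> x \<le> a \<Longrightarrow> insort x (A @ Z) = A @ insort x Z"
  by (induction A) auto

lemma insort_ge: "\<forall>b\<in>set B. x \<le> b \<Longrightarrow> insort x B = x # B"
  by (cases B) auto

lemma insort_append_ge: "\<forall>b\<in>set B. x \<le> b \<Longrightarrow> insort x (C @ B) = insort x C @ B"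
  by (induction C) (auto simp: insort_ge)

lemma sorted_merge_keys: "length F = length ks + 1 \<Longrightarrow> sorted_wrt (<) (merge F ks) \<Longrightarrow> sorted_wrt (<) ks"
  by (induction F ks rule: merge.induct) (auto simp: sorted_wrt_append set_merge)

lemma filt: "sorted_wrt (<) (ks::'a::linorder list) \<Longrightarrow>
  (\<forall>i<length (filter (\<lambda>k. k < x) ks). ks!i < x) \<and>
  (\<forall>i. length (filter (\<lambda>k. k < x) ks) \<le> i \<and> i < length ks \<longrightarrow> \<not> ks!i < x)"
proof (induction ks)
  case Nil then show ?case by simp
next
  case (Cons k ks)
  show ?case
  proof (cases "k < x")
    case True
    then show ?thesis using Cons by (auto simp: nth_Cons split: nat.splits)
  next
    case False
    have "\<forall>y\<in>set ks. k < y" using Cons by simp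
    then have "\<forall>y\<in>set ks. \<not> y < x" using False by (auto dest: order.strict_trans)
    then have "filter (\<lambda>k. k < x) ks = []" by (simp add: filter_empty_conv)
    then show ?thesis using False \<open>\<forall>y\<in>set ks. \<not> y < x\<close>
      by (auto simp: nth_Cons split: nat.splits)
  qed
qed

definition cnt :: "'a::linorder \<Rightarrow> 'a list \<Rightarrow> nat" where
  "cnt x ss = length (filter (\<lambda>s. s < x) ss)"

definition updS :: "nat \<Rightarrow> nat list \<Rightarrow> nat \<Rightarrow> nat list" where
  "updS m ns i = take i ns @ (if ns!i < 2*m then [Suc (ns!i)] else [m, ns!i - m]) @ drop (Suc i) ns"

lemma updS_app: "i < length ns \<Longrightarrow> updS m (A @ ns @ C) (length A + i) = A @ updS m ns i @ C"
  by (simp add: updS_def nth_append)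

fun resL :: "'a ins_res \<Rightarrow> 'a btree list" where
  "resL (Keep t) = [t]" | "resL (Split l a r) = [l, r]"
fun inord_res :: "'a ins_res \<Rightarrow> 'a list" where
  "inord_res (Keep t) = inord t" | "inord_res (Split l a r) = inord l @ a # inord r"

lemma merge_dec: "length ts = length ks + 1 \<Longrightarrow> j \<le> length ks \<Longrightarrow>
  merge (map f ts) ks = pre (map f (take j ts)) (take j ks) @ f (ts!j) @ merge ([] # map f (drop (Suc j) ts)) (drop j ks)"
proof -
  assume a: "length ts = length ks + 1" "j \<le> length ks"
  have "ts = take j ts @ ts!j # drop (Suc j) ts" using a by (simp add: id_take_nth_drop)
  then have "map f ts = map f (take j ts) @ f (ts!j) # map f (drop (Suc j) ts)"
    by (metis list.map(2) map_append)
  moreover have "ks = take j ks @ drop j ks" by simp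
  ultimately have "merge (map f ts) ks = merge (map f (take j ts) @ f (ts!j) # map f (drop (Suc j) ts)) (take j ks @ drop j ks)"
    by simp
  also have "\<dots> = pre (map f (take j ts)) (take j ks) @ merge (f (ts!j) # map f (drop (Suc j) ts)) (drop j ks)"
    by (rule merge_app) (use a in simp)
  finally show ?thesis by (subst (asm) merge_Cons_gen) simp
qed

lemma split_node_leaf: "resL (split_node m ks []) \<noteq> [] \<and> (\<forall>t\<in>set (resL (split_node m ks [])). bwf t) \<and>
   inord_res (split_node m ks []) = ks \<and>
   map length (concat (map lvs (resL (split_node m ks [])))) =
     (if length ks \<le> 2*m then [length ks] else [m, length ks - Suc m])"
proof (cases "length ks \<le> 2*m")
  case True then show ?thesis by (simp add: split_node_def)
next
  case False
  then have "m < length ks" by simp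
  then have "take m ks @ ks!m # drop (Suc m) ks = ks" by (simp add: id_take_nth_drop[symmetric])
  then show ?thesis using False by (simp add: split_node_def)
qed

lemma split_node_int: "ts \<noteq> [] \<Longrightarrow> bwf (BNode ks ts) \<Longrightarrow>
   (\<forall>t\<in>set (resL (split_node m ks ts)). bwf t) \<and>
   inord_res (split_node m ks ts) = inord (BNode ks ts) \<and>
   concat (map lvs (resL (split_node m ks ts))) = lvs (BNode ks ts)"
proof -
  assume ne: "ts \<noteq> []" and w: "bwf (BNode ks ts)"
  then have l: "length ts = length ks + 1" and wc: "\<forall>t\<in>set ts. bwf t" by auto
  show ?thesis
  proof (cases "length ks \<le> 2*m")
    case True then show ?thesis using w by (simp add: split_node_def)
  next
    case False
    then have mk: "m < length ks" by simp
    have sp: "split_node m ks ts = Split (BNode (take m ks) (take (m+1) ts)) (ks ! m)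
                 (BNode (drop (m+1) ks) (drop (m+1) ts))" using False by (simp add: split_node_def)
    have ne1: "take (m+1) ts \<noteq> []" "drop (m+1) ts \<noteq> []" using mk l by auto
    have wf1: "bwf (BNode (take m ks) (take (m+1) ts))" "bwf (BNode (drop (m+1) ks) (drop (m+1) ts))"
      using mk l wc by (auto dest: in_set_takeD in_set_dropD)
    have io: "inord (BNode ks ts) = merge (take (m+1) (map inord ts)) (take m ks) @ ks!m #
               merge (drop (m+1) (map inord ts)) (drop (m+1) ks)"
      using merge_split[of "map inord ts" ks m] ne l mk by simp
    have lv: "lvs (BNode ks ts) = concat (map lvs (take (m+1) ts)) @ concat (map lvs (drop (m+1) ts))"
      using ne by (metis append_take_drop_id concat_append lvs.simps map_append)
    have i1: "inord (BNode (take m ks) (take (m+1) ts)) = merge (take (m+1) (map inord ts)) (take m ks)"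
      using ne1 by (simp add: take_map)
    have i2: "inord (BNode (drop (m+1) ks) (drop (m+1) ts)) = merge (drop (m+1) (map inord ts)) (drop (m+1) ks)"
      using ne1 by (simp add: drop_map)
    have l1: "lvs (BNode (take m ks) (take (m+1) ts)) = concat (map lvs (take (m+1) ts))"
      using ne1 by simp
    have l2: "lvs (BNode (drop (m+1) ks) (drop (m+1) ts)) = concat (map lvs (drop (m+1) ts))"
      using ne1 by simp
    show ?thesis unfolding sp resL.simps inord_res.simps
      by (simp only: i1 i2 l1 l2 io lv list.map concat.simps append_Nil2) (use wf1 in simp)
  qed
qed


lemma ins_main:
  fixes x :: "'a::linorder"
  assumes "bwf t" "sorted_wrt (<) (inord t)" "x \<notin> set (inord t)"
  shows "(\<forall>t'\<in>set (resL (ins m x t)). bwf t') \<and> inord_res (ins m x t) = insort x (inord t) \<and>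
     map length (concat (map lvs (resL (ins m x t)))) = updS m (map length (lvs t)) (cnt x (seps t))"
  using assms
proof (induction m x t rule: ins.induct)
  case (1 m x ks ts)
  show ?case
  proof (cases "ts = []")
    case True
    have "length (insort x ks) = Suc (length ks)" by simp
    then show ?thesis using True split_node_leaf[of m "insort x ks"]
      by (auto simp: updS_def cnt_def)
  next
    case False
    note IH = "1.IH"[OF False refl]
    from "1.prems" False have l: "length ts = length ks + 1" and wc: "\<forall>t\<in>set ts. bwf t" by auto
    define j where "j = length (filter (\<lambda>k. k < x) ks)"
    have jle: "j \<le> length ks" unfolding j_def by (rule length_filter_le)
    then have jlt: "j < length ts" using l by simp
    define tj where "tj = ts ! j"
    have wtj: "bwf tj" using wc jlt tj_def by simp
    have ins_eq: "ins m x (BNode ks ts) = (case ins m x tj of Keep t \<Rightarrow> Keep (BNode ks (ts[j := t]))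
         | Split l a r \<Rightarrow> split_node m (take j ks @ a # drop j ks) (take j ts @ l # r # drop (j+1) ts))"
      using False jlt[unfolded j_def] unfolding j_def tj_def by (simp add: Let_def)
    define P where "P = pre (map inord (take j ts)) (take j ks)"
    define B where "B = merge ([] # map inord (drop (Suc j) ts)) (drop j ks)"
    have io: "inord (BNode ks ts) = P @ inord tj @ B"
      using merge_dec[OF l jle, of inord] False by (simp add: P_def B_def tj_def)
    have so: "sorted_wrt (<) (P @ inord tj @ B)" using "1.prems" io by simp
    have xn: "x \<notin> set (P @ inord tj @ B)" using "1.prems" io by simp
    have sks: "sorted_wrt (<) ks" using "1.prems" False l sorted_merge_keys[of "map inord ts" ks] by simp
    note fl = filt[OF sks, of x, folded j_def]
    have setP: "set P = (\<Union>t\<in>set (take j ts). set (inord t)) \<union> set (take j ks)"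
      unfolding P_def using jle l by (subst set_pre) auto
    have setB: "set B = (\<Union>t\<in>set (drop (Suc j) ts). set (inord t)) \<union> set (drop j ks)"
      unfolding B_def using jle l by (subst set_merge) auto
    have Pless: "\<forall>p\<in>set P. p < x"
    proof (cases j)
      case 0 then show ?thesis by (simp add: P_def)
    next
      case (Suc j')
      have kx: "ks ! j' < x" using fl Suc by simp
      have tk: "take j ks = take j' ks @ [ks ! j']" using Suc jle by (simp add: take_Suc_conv_app_nth)
      have tt: "take j ts = take j' ts @ [ts ! j']" using Suc jlt by (simp add: take_Suc_conv_app_nth)
      have Peq: "P = pre (map inord (take j' ts)) (take j' ks) @ inord (ts ! j') @ [ks ! j']"
        unfolding P_def tk tt using Suc jle jlt by (simp add: pre_snoc)
      then have "sorted_wrt (<) ((pre (map inord (take j' ts)) (take j' ks) @ inord (ts ! j')) @ [ks ! j'])"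
        using so by (simp add: sorted_wrt_append)
      then have "\<forall>p\<in>set (pre (map inord (take j' ts)) (take j' ks) @ inord (ts ! j')). p < ks ! j'"
        by (auto simp: sorted_wrt_append)
      then show ?thesis using kx Peq by (auto dest: order.strict_trans)
    qed
    have Bgt: "\<forall>b\<in>set B. x < b"
    proof (cases "j < length ks")
      case False
      then have "drop j ks = []" by simp
      then show ?thesis by (simp add: B_def)
    next
      case True
      have "drop j ks = ks ! j # drop (Suc j) ks" using True by (simp add: Cons_nth_drop_Suc)
      then have Bc: "B = ks ! j # merge (map inord (drop (Suc j) ts)) (drop (Suc j) ks)"
        by (simp add: B_def)
      have "x \<noteq> ks ! j" using xn Bc by auto
      moreover have "\<not> ks ! j < x" using fl True by simp
      ultimately have xk: "x < ks ! j" by simp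
      have "\<forall>b\<in>set (merge (map inord (drop (Suc j) ts)) (drop (Suc j) ks)). ks ! j < b"
        using so Bc by (simp add: sorted_wrt_append)
      then show ?thesis using Bc xk by auto
    qed
    have sotj: "sorted_wrt (<) (inord tj)" using so by (simp add: sorted_wrt_append)
    have xtj: "x \<notin> set (inord tj)" using xn by simp
    note IHj = IH[folded j_def, folded tj_def, OF jlt wtj sotj xtj]
    define Ps where "Ps = pre (map seps (take j ts)) (take j ks)"
    define Bs where "Bs = merge ([] # map seps (drop (Suc j) ts)) (drop j ks)"
    have sp: "seps (BNode ks ts) = Ps @ seps tj @ Bs"
      using merge_dec[OF l jle, of seps] False by (simp add: Ps_def Bs_def tj_def)
    have st: "\<forall>t\<in>set (take j ts). set (seps t) \<subseteq> set (inord t)"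
      using wc set_seps by (auto dest: in_set_takeD)
    have "set Ps \<subseteq> set P"
      unfolding Ps_def setP using jle l st
      by (subst set_pre) auto
    then have Psl: "\<forall>p\<in>set Ps. p < x" using Pless by auto
    have sd: "\<forall>t\<in>set (drop (Suc j) ts). set (seps t) \<subseteq> set (inord t)"
      using wc set_seps by (auto dest: in_set_dropD)
    have "set Bs \<subseteq> set B"
      unfolding Bs_def setB using jle l sd
      by (subst set_merge) auto
    then have Bsg: "\<forall>p\<in>set Bs. \<not> p < x" using Bgt by force
    have cnt_eq: "cnt x (seps (BNode ks ts)) = length Ps + cnt x (seps tj)"
      unfolding sp cnt_def using Psl Bsg by (simp add: filter_empty_conv)
    define Lpre where "Lpre = concat (map lvs (take j ts))"
    define Lpost where "Lpost = concat (map lvs (drop (Suc j) ts))"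
    have "ts = take j ts @ tj # drop (Suc j) ts" using jlt by (simp add: tj_def id_take_nth_drop)
    then have lv: "lvs (BNode ks ts) = Lpre @ lvs tj @ Lpost" using False
      by (metis Lpost_def Lpre_def concat.simps(2) concat_append list.simps(9) lvs.simps map_append)
    have "map (\<lambda>t. length (lvs t)) (take j ts) = map (\<lambda>t. Suc (length (seps t))) (take j ts)"
      using wc wf_lengths by (intro map_cong) (auto dest!: in_set_takeD)
    then have "sum_list (map (\<lambda>t. length (lvs t)) (take j ts)) = sum_list (map (\<lambda>t. Suc (length (seps t))) (take j ts))"
      by (rule arg_cong)
    then have "length Lpre = length (concat (map seps (take j ts))) + j"
      unfolding Lpre_def using jlt
      by (simp add: length_concat o_def sum_list_Suc)
    then have lPs: "length Ps = length Lpre" unfolding Ps_def using jle jlt by (simp add: length_pre)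
    have clt: "cnt x (seps tj) < length (lvs tj)"
      using wf_lengths[OF wtj] length_filter_le[of _ "seps tj"] unfolding cnt_def by (metis less_Suc_eq_le Suc_eq_plus1)
    have upd: "updS m (map length (lvs (BNode ks ts))) (cnt x (seps (BNode ks ts)))
        = map length Lpre @ updS m (map length (lvs tj)) (cnt x (seps tj)) @ map length Lpost"
      unfolding lv cnt_eq lPs using clt updS_app[of "cnt x (seps tj)" "map length (lvs tj)" m "map length Lpre"]
      by simp
    show ?thesis
    proof (cases "ins m x tj")
      case (Keep t1)
      from IHj Keep have w1: "bwf t1" and i1: "inord t1 = insort x (inord tj)"
        and s1: "map length (lvs t1) = updS m (map length (lvs tj)) (cnt x (seps tj))" by auto
      have ne': "ts[j := t1] \<noteq> []" using False by simp
      have "bwf (BNode ks (ts[j := t1]))" using l wc w1 by (auto dest: set_update_subset_insert[THEN subsetD])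
      moreover have "inord (BNode ks (ts[j := t1])) = P @ inord t1 @ B"
        using merge_dec[of "ts[j := t1]" ks j inord] l jle ne'
        by (simp add: P_def B_def take_update_cancel drop_update_cancel)
      moreover have "lvs (BNode ks (ts[j := t1])) = Lpre @ lvs t1 @ Lpost"
      proof -
        have "ts[j := t1] = take j ts @ t1 # drop (Suc j) ts" using jlt by (simp add: upd_conv_take_nth_drop)
        then show ?thesis using ne' by (simp add: Lpre_def Lpost_def)
      qed
      moreover have "insort x (P @ inord tj @ B) = P @ insort x (inord tj) @ B"
        using Pless Bgt by (simp add: insort_append_less insort_append_ge less_imp_le not_le)
      ultimately show ?thesis using ins_eq Keep io i1 s1 upd by simp
    next
      case (Split tl a tr)
      from IHj Split have w1: "bwf tl" "bwf tr" and i1: "inord tl @ a # inord tr = insort x (inord tj)"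
        and s1: "map length (lvs tl @ lvs tr) = updS m (map length (lvs tj)) (cnt x (seps tj))" by auto
      define ks' where "ks' = take j ks @ a # drop j ks"
      define ts' where "ts' = take j ts @ tl # tr # drop (j+1) ts"
      have ne': "ts' \<noteq> []" by (simp add: ts'_def)
      have wN: "bwf (BNode ks' ts')" using l wc w1 jle unfolding ks'_def ts'_def
        by (auto dest: in_set_takeD in_set_dropD)
      have "merge (map inord ts') ks' = P @ merge (inord tl # inord tr # map inord (drop (Suc j) ts)) (a # drop j ks)"
        unfolding ts'_def ks'_def P_def using jle jlt by (simp add: merge_app)
      also have "\<dots> = P @ (inord tl @ a # inord tr) @ B"
        unfolding B_def by (simp add: merge_Cons_gen[of "inord tr"])
      finally have ioN: "inord (BNode ks' ts') = P @ insort x (inord tj) @ B" using ne' i1 by simp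
      have lvN: "lvs (BNode ks' ts') = Lpre @ (lvs tl @ lvs tr) @ Lpost"
        using ne' by (simp add: ts'_def Lpre_def Lpost_def)
      have "insort x (P @ inord tj @ B) = P @ insort x (inord tj) @ B"
        using Pless Bgt by (simp add: insort_append_less insort_append_ge less_imp_le not_le)
      then show ?thesis using ins_eq Split split_node_int[OF ne' wN, of m] io ioN lvN s1 upd
        by (simp add: ks'_def ts'_def)
    qed
  qed
qed


lemma insert_main:
  fixes x :: "'a::linorder"
  assumes "bwf t" "sorted_wrt (<) (inord t)" "x \<notin> set (inord t)"
  shows "bwf (insert_key m x t) \<and> inord (insert_key m x t) = insort x (inord t) \<and>
     map length (lvs (insert_key m x t)) = updS m (map length (lvs t)) (cnt x (seps t))"
  using ins_main[OF assms, of m] by (cases "ins m x t") (auto simp: insert_key_def)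

definition szinv :: "nat \<Rightarrow> nat list \<Rightarrow> bool" where
  "szinv m ns \<longleftrightarrow> ns \<noteq> [] \<and> ((length ns = 1 \<and> hd ns \<le> 2*m) \<or> (\<forall>n\<in>set ns. m \<le> n \<and> n \<le> 2*m))"

lemma szinv_upd: "szinv m ns \<Longrightarrow> i < length ns \<Longrightarrow> szinv m (updS m ns i)"
proof -
  assume a: "szinv m ns" "i < length ns"
  show ?thesis
  proof (cases "length ns = 1 \<and> hd ns \<le> 2*m")
    case True
    then obtain k where ns: "ns = [k]" "k \<le> 2*m" by (cases ns) auto
    then have "i = 0" using a by simp
    then show ?thesis using ns by (auto simp: updS_def szinv_def)
  next
    case False
    then have all: "\<forall>n\<in>set ns. m \<le> n \<and> n \<le> 2*m" using a by (auto simp: szinv_def)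
    have ni: "ns ! i \<in> set ns" using a by simp
    have "\<forall>n\<in>set (updS m ns i). m \<le> n \<and> n \<le> 2*m"
      using all ni unfolding updS_def
      by (auto dest: in_set_takeD in_set_dropD)
    moreover have "updS m ns i \<noteq> []" by (simp add: updS_def)
    ultimately show ?thesis by (simp add: szinv_def)
  qed
qed

lemma build_snoc: "build m (xs @ [x]) = insert_key m x (build m xs)"
  by (simp add: build_def)

lemma build_inv:
  fixes xs :: "'a::linorder list"
  shows "distinct xs \<Longrightarrow> bwf (build m xs) \<and> sorted_wrt (<) (inord (build m xs)) \<and>
    set (inord (build m xs)) = set xs \<and> szinv m (map length (lvs (build m xs)))"
proof (induction xs rule: rev_induct)
  case Nil
  then show ?case by (simp add: build_def szinv_def)
next
  case (snoc x xs)
  let ?t = "build m xs"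
  from snoc have IH: "bwf ?t" "sorted_wrt (<) (inord ?t)" "set (inord ?t) = set xs" "szinv m (map length (lvs ?t))"
    by auto
  have xn: "x \<notin> set (inord ?t)" using snoc IH by simp
  note I = insert_main[OF IH(1,2) xn, of m]
  have "cnt x (seps ?t) < length (lvs ?t)"
    using wf_lengths[OF IH(1)] length_filter_le[of _ "seps ?t"] unfolding cnt_def by (metis less_Suc_eq_le Suc_eq_plus1)
  then have "szinv m (map length (lvs (insert_key m x ?t)))"
    using I szinv_upd[OF IH(4)] by simp
  moreover have "sorted_wrt (<) (insort x (inord ?t))"
    using IH(2) xn by (simp add: strict_sorted_iff sorted_insort distinct_insort)
  ultimately show ?case using I IH xn by (simp add: build_snoc set_insort_key)
qed

lemma insort_map_mono: "strict_mono (h::'a::linorder \<Rightarrow> 'b::linorder) \<Longrightarrow> insort (h x) (map h ks) = map h (insort x ks)"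
  by (induction ks) (auto simp: strict_mono_less_eq)

lemma filter_map_mono: "strict_mono (h::'a::linorder \<Rightarrow> 'b::linorder) \<Longrightarrow>
   length (filter (\<lambda>k. k < h x) (map h ks)) = length (filter (\<lambda>k. k < x) ks)"
  by (induction ks) (auto simp: strict_mono_less)

lemma split_node_map: "split_node m (map h ks) (map (map_btree h) ts) = map_ins_res h (split_node m ks ts)"
  by (auto simp: split_node_def take_map drop_map)

lemma ins_map: "strict_mono (h::'a::linorder \<Rightarrow> 'b::linorder) \<Longrightarrow>
   ins m (h x) (map_btree h t) = map_ins_res h (ins m x t)"
proof (induction m x t rule: ins.induct)
  case (1 m x ks ts)
  show ?case
  proof (cases "ts = []")
    case True
    then show ?thesis using split_node_map[of m h "insort x ks" "[]"] 1(2)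
      by (simp add: insort_map_mono)
  next
    case False
    define j where "j = length (filter (\<lambda>k. k < x) ks)"
    have jj: "length (filter (\<lambda>k. k < h x) (map h ks)) = j" using filter_map_mono[OF 1(2)] j_def by simp
    show ?thesis
    proof (cases "j < length ts")
      case False
      then show ?thesis using \<open>ts \<noteq> []\<close> jj by (simp add: j_def[symmetric] Let_def)
    next
      case True
      note IH = "1.IH"[OF \<open>ts \<noteq> []\<close> refl, folded j_def, OF True 1(2)]
      show ?thesis
      proof (cases "ins m x (ts ! j)")
        case (Keep t1)
        then show ?thesis using \<open>ts \<noteq> []\<close> jj True IH
          by (simp add: j_def[symmetric] Let_def map_update)
      next
        case (Split l a r)
        have "split_node m (take j (map h ks) @ h a # drop j (map h ks))
                (take j (map (map_btree h) ts) @ map_btree h l # map_btree h r # drop (j+1) (map (map_btree h) ts))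
              = split_node m (map h (take j ks @ a # drop j ks)) (map (map_btree h) (take j ts @ l # r # drop (j+1) ts))"
          by (simp add: take_map drop_map)
        also have "\<dots> = map_ins_res h (split_node m (take j ks @ a # drop j ks) (take j ts @ l # r # drop (j+1) ts))"
          by (rule split_node_map)
        finally show ?thesis using \<open>ts \<noteq> []\<close> jj True IH Split
          by (simp add: j_def[symmetric] Let_def)
      qed
    qed
  qed
qed

lemma insert_key_map: "strict_mono (h::'a::linorder \<Rightarrow> 'b::linorder) \<Longrightarrow>
   insert_key m (h x) (map_btree h t) = map_btree h (insert_key m x t)"
  by (simp add: insert_key_def ins_map split: ins_res.splits)

lemma build_map: "strict_mono (h::'a::linorder \<Rightarrow> 'b::linorder) \<Longrightarrow>
   build m (map h xs) = map_btree h (build m xs)"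
  by (induction xs rule: rev_induct) (auto simp: build_snoc insert_key_map build_def)

lemma lvs_map: "lvs (map_btree h t) = map (map h) (lvs t)"
proof (induction t rule: lvs.induct)
  case (1 ks ts)
  show ?case
  proof (cases "ts = []")
    case False
    then have "map (\<lambda>x. lvs (map_btree h x)) ts = map (\<lambda>x. map (map h) (lvs x)) ts"
      using 1 by (intro map_cong) auto
    have "lvs (map_btree h (BNode ks ts)) = concat (map (\<lambda>x. lvs (map_btree h x)) ts)" using False by (simp add: o_def)
    also have "\<dots> = concat (map (\<lambda>x. map (map h) (lvs x)) ts)" using \<open>map _ ts = _\<close> by (rule arg_cong)
    also have "\<dots> = map (map h) (lvs (BNode ks ts))" using False by (simp add: map_concat o_def)
    finally show ?thesis .
  qed simp
qed

lemma seps_map: "seps (map_btree h t) = map h (seps t)"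
proof (induction t rule: seps.induct)
  case (1 ks ts)
  show ?case
  proof (cases "ts = []")
    case False
    have e: "map (\<lambda>x. seps (map_btree h x)) ts = map (\<lambda>x. map h (seps x)) ts"
      using 1 False by (intro map_cong) auto
    have "seps (map_btree h (BNode ks ts)) = merge (map (\<lambda>x. seps (map_btree h x)) ts) (map h ks)"
      using False by (simp add: o_def)
    also have "\<dots> = merge (map (\<lambda>x. map h (seps x)) ts) (map h ks)" using e by (rule arg_cong)
    also have "\<dots> = merge (map (map h) (map seps ts)) (map h ks)" by (simp add: o_def)
    also have "\<dots> = map h (seps (BNode ks ts))" using False by (simp only: merge_map seps.simps if_False)
    finally show ?thesis .
  qed simp
qed


lemma upt_split_eq: "L @ s # R = [a..<b] \<Longrightarrow> s = a + length L \<and> R = [Suc s..<b] \<and> s < b"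
proof -
  assume h: "L @ s # R = [a..<b]"
  have len: "length L < b - a" using arg_cong[OF h, of length] by simp
  have "s = [a..<b] ! length L" using h[symmetric] by simp
  then have s: "s = a + length L" using len by simp
  have "R = drop (Suc (length L)) [a..<b]" using h[symmetric] by simp
  then have "R = [Suc s..<b]" using s by simp
  then show ?thesis using s len by simp
qed

lemma gap: "length Ls = length ss + 1 \<Longrightarrow> merge Ls ss = [a..<b] \<Longrightarrow> a \<le> b \<Longrightarrow>
  (\<Sum>r\<in>{a..b}. G (cnt r ss)) = (\<Sum>i<length Ls. real (length (Ls!i) + 1) * (G i :: real))"
proof (induction ss arbitrary: Ls a G)
  case Nil
  then obtain L where Ls: "Ls = [L]" by (cases Ls) auto
  then have "L = [a..<b]" using Nil by simp
  then show ?case using Ls Nil by (simp add: cnt_def of_nat_diff)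
next
  case (Cons s ss)
  then obtain L Ls' where Ls: "Ls = L # Ls'" by (cases Ls) auto
  have l': "length Ls' = length ss + 1" using Cons Ls by simp
  have "L @ s # merge Ls' ss = [a..<b]" using Cons Ls by simp
  note u = upt_split_eq[OF this]
  have "set ss \<subseteq> set (merge Ls' ss)" using set_merge[OF l'] by auto
  then have sg: "\<forall>v\<in>set ss. s < v" using u by auto
  have dis: "{a..b} = {a..s} \<union> {Suc s..b}" "{a..s} \<inter> {Suc s..b} = {}" using u by auto
  have "(\<Sum>r\<in>{a..s}. G (cnt r (s # ss))) = (\<Sum>r\<in>{a..s}. G 0)"
  proof (rule sum.cong)
    fix r assume "r \<in> {a..s}"
    then have "cnt r (s # ss) = 0" using sg unfolding cnt_def by (auto simp: filter_empty_conv)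
    then show "G (cnt r (s # ss)) = G 0" by simp
  qed simp
  also have "\<dots> = real (length L + 1) * G 0" using u by (simp add: of_nat_diff)
  finally have A: "(\<Sum>r\<in>{a..s}. G (cnt r (s # ss))) = real (length L + 1) * G 0" .
  have "(\<Sum>r\<in>{Suc s..b}. G (cnt r (s # ss))) = (\<Sum>r\<in>{Suc s..b}. G (Suc (cnt r ss)))"
    by (rule sum.cong) (auto simp: cnt_def)
  also have "\<dots> = (\<Sum>i<length Ls'. real (length (Ls'!i) + 1) * G (Suc i))"
    using Cons.IH[OF l', of "Suc s" "\<lambda>i. G (Suc i)"] u by simp
  finally have B: "(\<Sum>r\<in>{Suc s..b}. G (cnt r (s # ss))) = (\<Sum>i<length Ls'. real (length (Ls'!i) + 1) * G (Suc i))" .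
  have "(\<Sum>r\<in>{a..b}. G (cnt r (s # ss))) = (\<Sum>r\<in>{a..s}. G (cnt r (s # ss))) + (\<Sum>r\<in>{Suc s..b}. G (cnt r (s # ss)))"
    unfolding dis(1) by (rule sum.union_disjoint) (use dis in auto)
  also have "\<dots> = (\<Sum>i<length Ls. real (length (Ls!i) + 1) * G i)"
    unfolding A B Ls length_Cons by (subst sum.lessThan_Suc_shift) (simp del: sum.lessThan_Suc)
  finally show ?case .
qed

definition sh :: "nat \<Rightarrow> nat \<Rightarrow> nat" where "sh r v = (if v < r then v else Suc v)"

lemma sh_mono: "strict_mono (sh r)"
  by (auto simp: strict_mono_def sh_def)

lemma sh_inj: "inj (sh r)"
  using sh_mono strict_mono_imp_inj_on by blast

lemma sh_image: "1 \<le> r \<Longrightarrow> r \<le> Suc N \<Longrightarrow> sh r ` {1..N} = {1..Suc N} - {r}"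
proof
  assume "1 \<le> r" "r \<le> Suc N"
  show "sh r ` {1..N} \<subseteq> {1..Suc N} - {r}" by (auto simp: sh_def)
  show "{1..Suc N} - {r} \<subseteq> sh r ` {1..N}"
  proof
    fix v assume v: "v \<in> {1..Suc N} - {r}"
    show "v \<in> sh r ` {1..N}"
    proof (cases "v < r")
      case True
      then show ?thesis using v \<open>r \<le> Suc N\<close> by (intro image_eqI[of _ _ v]) (auto simp: sh_def)
    next
      case False
      then show ?thesis using v \<open>1 \<le> r\<close> by (intro image_eqI[of _ _ "v - 1"]) (auto simp: sh_def)
    qed
  qed
qed

abbreviation PL :: "nat \<Rightarrow> nat list set" where "PL N \<equiv> permutations_of_set {1..N}"

definition extp :: "nat list \<times> nat \<Rightarrow> nat list" where "extp p = map (sh (snd p)) (fst p) @ [snd p]"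

lemma PL_Suc: "PL (Suc N) = extp ` (PL N \<times> {1..Suc N})"
proof
  show "extp ` (PL N \<times> {1..Suc N}) \<subseteq> PL (Suc N)"
  proof
    fix ys assume "ys \<in> extp ` (PL N \<times> {1..Suc N})"
    then obtain xs r where xs: "xs \<in> PL N" "r \<in> {1..Suc N}" "ys = map (sh r) xs @ [r]"
      by (auto simp: extp_def)
    have "set (map (sh r) xs) = {1..Suc N} - {r}" using xs sh_image[of r N]
      by (auto simp: permutations_of_set_def)
    moreover have "distinct (map (sh r) xs)" using xs sh_inj
      by (auto simp: permutations_of_set_def distinct_map intro: inj_on_subset[OF sh_inj])
    ultimately show "ys \<in> PL (Suc N)" using xs by (auto simp: permutations_of_set_def)
  qed
next
  show "PL (Suc N) \<subseteq> extp ` (PL N \<times> {1..Suc N})"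
  proof
    fix ys assume ys: "ys \<in> PL (Suc N)"
    then have ne: "ys \<noteq> []" by (auto simp: permutations_of_set_def)
    define r where "r = last ys"
    define zs where "zs = butlast ys"
    have yz: "ys = zs @ [r]" using ne by (simp add: r_def zs_def)
    have dz: "distinct zs" "r \<notin> set zs" using ys yz by (auto simp: permutations_of_set_def)
    have r: "r \<in> {1..Suc N}" using ys yz by (auto simp: permutations_of_set_def)
    have sz: "set zs = {1..Suc N} - {r}" using ys yz dz by (auto simp: permutations_of_set_def)
    define xs where "xs = map (\<lambda>v. if v < r then v else v - 1) zs"
    have mz: "map (sh r) xs = zs"
      unfolding xs_def using dz(2) by (induction zs) (auto simp: sh_def)
    have "sh r ` set xs = sh r ` {1..N}" using mz sz sh_image[of r N] r by (metis atLeastAtMost_iff list.set_map)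
    then have sx: "set xs = {1..N}" using sh_inj by (simp add: inj_image_eq_iff)
    have "distinct xs" using mz dz by (metis distinct_map)
    then have "xs \<in> PL N" using sx by (auto simp: permutations_of_set_def)
    then show "ys \<in> extp ` (PL N \<times> {1..Suc N})" using r yz mz
      by (intro image_eqI[of _ _ "(xs, r)"]) (auto simp: extp_def)
  qed
qed

lemma extp_inj: "inj extp"
proof (rule injI)
  fix p q :: "nat list \<times> nat" assume h: "extp p = extp q"
  obtain xs r where p: "p = (xs, r)" by (cases p)
  obtain xs' r' where q: "q = (xs', r')" by (cases q)
  have "r = r'" using h p q arg_cong[OF h, of last] by (simp add: extp_def)
  then have "map (sh r) xs = map (sh r) xs'" using h p q by (simp add: extp_def)
  then have "xs = xs'" using sh_inj by (simp add: inj_map_eq_map)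
  then show "p = q" using p q \<open>r = r'\<close> by simp
qed

lemma sum_PL_Suc: "(\<Sum>ys\<in>PL (Suc N). f ys) = (\<Sum>xs\<in>PL N. \<Sum>r\<in>{1..Suc N}. f (map (sh r) xs @ [r]))"
proof -
  have "(\<Sum>ys\<in>PL (Suc N). f ys) = (\<Sum>p\<in>PL N \<times> {1..Suc N}. f (extp p))"
    unfolding PL_Suc using sum.reindex[OF inj_on_subset[OF extp_inj subset_UNIV], of f] by (simp add: o_def)
  also have "\<dots> = (\<Sum>(xs,r)\<in>PL N \<times> {1..Suc N}. f (map (sh r) xs @ [r]))"
    by (simp add: extp_def case_prod_beta)
  also have "\<dots> = (\<Sum>xs\<in>PL N. \<Sum>r\<in>{1..Suc N}. f (map (sh r) xs @ [r]))"
    by (rule sum.cartesian_product[symmetric])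
  finally show ?thesis .
qed


lemma cnt_sh: "cnt r (map (sh r) S) = cnt r S"
proof -
  have "(\<lambda>s. s < r) \<circ> sh r = (\<lambda>s. s < r)" by (rule ext) (simp add: sh_def)
  then show ?thesis by (simp add: cnt_def filter_map)
qed

lemma step_xs:
  assumes "xs \<in> PL N"
  shows "map length (lvs (build m (map (sh r) xs @ [r]))) = updS m (map length (lvs (build m xs))) (cnt r (seps (build m xs)))"
proof -
  have d: "distinct xs" using assms by (auto simp: permutations_of_set_def)
  have d': "distinct (map (sh r) xs)" using d inj_on_subset[OF sh_inj subset_UNIV] by (simp add: distinct_map)
  note bi = build_inv[OF d', of m]
  have bm: "build m (map (sh r) xs) = map_btree (sh r) (build m xs)" by (rule build_map[OF sh_mono])
  have rn: "r \<notin> set (inord (build m (map (sh r) xs)))" using bi by (auto simp: sh_def)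
  note I = insert_main[OF conjunct1[OF bi] conjunct1[OF conjunct2[OF bi]] rn, of m]
  have "map length (lvs (build m (map (sh r) xs))) = map length (lvs (build m xs))"
    unfolding bm lvs_map by simp
  moreover have "cnt r (seps (build m (map (sh r) xs))) = cnt r (seps (build m xs))"
    unfolding bm seps_map cnt_sh ..
  ultimately show ?thesis using I by (simp add: build_snoc)
qed

lemma inord_PL:
  assumes "xs \<in> PL N"
  shows "inord (build m xs) = [1..<Suc N]"
proof -
  have d: "distinct xs" "set xs = {1..N}" using assms by (auto simp: permutations_of_set_def)
  note bi = build_inv[OF d(1), of m]
  have "sorted [1..<Suc N]" "distinct [1..<Suc N]" "set [1..<Suc N] = {1..N}"
    by (rule sorted_upt, rule distinct_upt) auto
  then show ?thesis
    using sorted_distinct_set_unique[of "inord (build m xs)" "[1..<Suc N]"] bi d by (simp add: strict_sorted_iff)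
qed

lemma sum_r:
  fixes m :: nat
  assumes "xs \<in> PL N"
  defines "ns \<equiv> map length (lvs (build m xs))"
  shows "(\<Sum>r\<in>{1..Suc N}. F (map length (lvs (build m (map (sh r) xs @ [r]))))) =
         (\<Sum>i<length ns. real (ns!i + 1) * (F (updS m ns i) :: real))"
proof -
  let ?t = "build m xs"
  have d: "distinct xs" using assms by (auto simp: permutations_of_set_def)
  note bi = build_inv[OF d, of m]
  note wl = wf_lengths[OF conjunct1[OF bi]]
  have "(\<Sum>r\<in>{1..Suc N}. F (map length (lvs (build m (map (sh r) xs @ [r])))))
      = (\<Sum>r\<in>{1..Suc N}. F (updS m ns (cnt r (seps ?t))))"
    using step_xs[OF assms(1)] ns_def by simp
  also have "\<dots> = (\<Sum>i<length (lvs ?t). real (length (lvs ?t ! i) + 1) * F (updS m ns i))"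
    by (rule gap) (use wl inord_PL[OF assms(1), of m] in auto)
  also have "\<dots> = (\<Sum>i<length ns. real (ns!i + 1) * (F (updS m ns i)))"
    by (simp add: ns_def)
  finally show ?thesis .
qed

lemma sum_ns_PL:
  assumes "xs \<in> PL N"
  shows "sum_list (map length (lvs (build m xs))) + length (lvs (build m xs)) = Suc N"
proof -
  have d: "distinct xs" using assms by (auto simp: permutations_of_set_def)
  note bi = build_inv[OF d, of m]
  note wl = wf_lengths[OF conjunct1[OF bi]]
  have "length (inord (build m xs)) = N" using inord_PL[OF assms] by simp
  then show ?thesis using wl length_merge[of "lvs (build m xs)" "seps (build m xs)"]
    by (simp add: length_concat)
qed

lemma szinv_PL:
  assumes "xs \<in> PL N"
  shows "szinv m (map length (lvs (build m xs)))"
  using assms build_inv[of xs m] by (auto simp: permutations_of_set_def)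

lemma count_upd: "i < length ns \<Longrightarrow> real (count_list (updS m ns i) k) =
  real (count_list ns k) - (if ns!i = k then 1 else 0) +
  real (count_list (if ns!i < 2*m then [Suc (ns!i)] else [m, ns!i - m]) k)"
proof -
  assume i: "i < length ns"
  have "ns = take i ns @ ns!i # drop (Suc i) ns" using i by (simp add: id_take_nth_drop)
  then have "count_list ns k = count_list (take i ns @ ns!i # drop (Suc i) ns) k"
    by (rule arg_cong[where f="\<lambda>l. count_list l k"])
  then have "count_list ns k = count_list (take i ns) k + (if ns!i = k then 1 else 0) + count_list (drop (Suc i) ns) k"
    by simp
  then show ?thesis by (simp add: updS_def)
qed

lemma sum_nth_list: "(\<Sum>i<length xs. h (xs!i)) = sum_list (map h xs)"
  by (induction xs) (auto simp: sum.lessThan_Suc_shift simp del: sum.lessThan_Suc)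

lemma sum_list_234: "\<forall>n\<in>set ns. n = 2 \<or> n = 3 \<or> n = 4 \<Longrightarrow>
  sum_list (map (h :: nat \<Rightarrow> real) ns) = h 2 * count_list ns 2 + h 3 * count_list ns 3 + h 4 * count_list ns 4"
  by (induction ns) (auto simp: algebra_simps)

lemma length_234: "\<forall>n\<in>set (ns::nat list). n = 2 \<or> n = 3 \<or> n = 4 \<Longrightarrow>
  length ns = count_list ns 2 + count_list ns 3 + count_list ns 4"
  by (induction ns) auto

lemma szinv_234:
  assumes "szinv 2 ns" "sum_list ns + length ns = Suc N" "5 \<le> N"
  shows "\<forall>n\<in>set ns. n = 2 \<or> n = 3 \<or> n = 4"
proof -
  have "\<not> (length ns = 1 \<and> hd ns \<le> 4)"
  proof
    assume h: "length ns = 1 \<and> hd ns \<le> 4"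
    then obtain k where "ns = [k]" by (cases ns) auto
    then show False using h assms by simp
  qed
  then have "\<forall>n\<in>set ns. 2 \<le> n \<and> n \<le> 4" using assms(1) by (auto simp: szinv_def)
  then show ?thesis by auto
qed


definition gk :: "nat \<Rightarrow> nat \<Rightarrow> real" where
  "gk k v = real (v+1) * (real (count_list (if v < 4 then [Suc v] else [2, v - 2]) k) - (if v = k then 1 else 0))"

lemma sum_list_real_Suc: "sum_list (map (\<lambda>v. real (v+1)) ns) = real (sum_list ns + length ns)"
  by (induction ns) auto

lemma step_count:
  assumes "xs \<in> PL N" "5 \<le> N"
  defines "ns \<equiv> map length (lvs (build 2 xs))"
  shows "(\<Sum>r\<in>{1..Suc N}. real (count_list (map length (lvs (build 2 (map (sh r) xs @ [r])))) k)) =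
     real (Suc N) * real (count_list ns k) + gk k 2 * count_list ns 2 + gk k 3 * count_list ns 3 + gk k 4 * count_list ns 4"
proof -
  let ?C = "real (count_list ns k)"
  have sl: "sum_list ns + length ns = Suc N" using sum_ns_PL[OF assms(1)] ns_def by simp
  have all: "\<forall>n\<in>set ns. n = 2 \<or> n = 3 \<or> n = 4"
    using szinv_234[OF szinv_PL[OF assms(1)] _ assms(2)] sl ns_def by simp
  have "(\<Sum>r\<in>{1..Suc N}. real (count_list (map length (lvs (build 2 (map (sh r) xs @ [r])))) k))
      = (\<Sum>i<length ns. real (ns!i + 1) * real (count_list (updS 2 ns i) k))"
    using sum_r[OF assms(1), of "\<lambda>l. real (count_list l k)" 2] ns_def by simp
  also have "\<dots> = (\<Sum>i<length ns. real (ns!i + 1) * ?C + gk k (ns!i))"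
    by (rule sum.cong) (simp_all add: count_upd gk_def algebra_simps)
  also have "\<dots> = (\<Sum>i<length ns. real (ns!i + 1)) * ?C + (\<Sum>i<length ns. gk k (ns!i))"
    by (simp only: sum.distrib sum_distrib_right)
  also have "\<dots> = sum_list (map (\<lambda>v. real (v+1)) ns) * ?C + sum_list (map (gk k) ns)"
    by (simp only: sum_nth_list[where xs=ns and h="\<lambda>v. real (v+1)"] sum_nth_list[where xs=ns and h="gk k"])
  also have "\<dots> = real (Suc N) * ?C + (gk k 2 * count_list ns 2 + gk k 3 * count_list ns 3 + gk k 4 * count_list ns 4)"
    by (simp only: sum_list_real_Suc sl sum_list_234[OF all])
  finally show ?thesis by (simp add: algebra_simps)
qed

definition Ek :: "nat \<Rightarrow> nat \<Rightarrow> real" where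
  "Ek k N = (\<Sum>xs\<in>PL N. real (count_list (map length (lvs (build 2 xs))) k)) / fact N"

lemma frac_aux: "(n::real) > 0 \<Longrightarrow> F > 0 \<Longrightarrow>
  (n*A + g2*B2 + g3*B3 + g4*B4)/(n*F) = A/F + (g2*(B2/F) + g3*(B3/F) + g4*(B4/F))/n"
  by (simp add: field_simps)

lemma Ek_rec:
  assumes "5 \<le> N"
  shows "Ek k (Suc N) = Ek k N + (gk k 2 * Ek 2 N + gk k 3 * Ek 3 N + gk k 4 * Ek 4 N) / real (Suc N)"
proof -
  let ?c = "\<lambda>k xs. real (count_list (map length (lvs (build 2 xs))) k)"
  have "(\<Sum>ys\<in>PL (Suc N). ?c k ys) = (\<Sum>xs\<in>PL N. \<Sum>r\<in>{1..Suc N}. ?c k (map (sh r) xs @ [r]))"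
    by (rule sum_PL_Suc)
  also have "\<dots> = (\<Sum>xs\<in>PL N. real (Suc N) * ?c k xs + gk k 2 * ?c 2 xs + gk k 3 * ?c 3 xs + gk k 4 * ?c 4 xs)"
  proof (rule sum.cong[OF refl])
    fix xs assume h: "xs \<in> PL N"
    show "(\<Sum>r\<in>{1..Suc N}. ?c k (map (sh r) xs @ [r])) = real (Suc N) * ?c k xs + gk k 2 * ?c 2 xs + gk k 3 * ?c 3 xs + gk k 4 * ?c 4 xs"
      by (rule step_count[OF h assms])
  qed
  also have "\<dots> = real (Suc N) * (\<Sum>xs\<in>PL N. ?c k xs) + gk k 2 * (\<Sum>xs\<in>PL N. ?c 2 xs)
      + gk k 3 * (\<Sum>xs\<in>PL N. ?c 3 xs) + gk k 4 * (\<Sum>xs\<in>PL N. ?c 4 xs)"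
    by (simp add: sum.distrib sum_distrib_left)
  finally have S: "(\<Sum>ys\<in>PL (Suc N). ?c k ys) = \<dots>" .
  have f: "(fact (Suc N) :: real) = real (Suc N) * fact N" by simp
  have fp: "(fact N :: real) > 0" by simp
  show ?thesis unfolding Ek_def S f
    by (rule frac_aux) (use fp in auto)
qed

lemma len2: "\<forall>n\<in>set ns. 2 \<le> n \<Longrightarrow> 2 * length ns \<le> sum_list (ns::nat list)"
  by (induction ns) auto

lemma ns22:
  assumes "szinv 2 ns" "sum_list ns + length ns = 6"
  shows "ns = [2,2]"
proof -
  have all: "\<forall>n\<in>set ns. n = 2 \<or> n = 3 \<or> n = 4" using szinv_234[OF assms(1), of 5] assms(2) by simp
  then have "2 * length ns \<le> sum_list ns" by (intro len2) auto
  then have l2: "length ns \<le> 2" using assms(2) by simp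
  have "length ns \<noteq> 0" using assms(1) by (simp add: szinv_def)
  moreover have "length ns \<noteq> 1"
  proof
    assume "length ns = 1"
    then obtain k where "ns = [k]" by (cases ns) auto
    then show False using all assms(2) by simp
  qed
  ultimately have "length ns = 2" using l2 by linarith
  then obtain a b where ab: "ns = [a, b]" by (metis length_0_conv length_Suc_conv numeral_2_eq_2)
  then show ?thesis using all assms(2) by auto
qed

lemma Ek5: "Ek 2 5 = 2" "Ek 3 5 = 0" "Ek 4 5 = 0"
proof -
  have ns: "\<And>xs. xs \<in> PL 5 \<Longrightarrow> map length (lvs (build 2 xs)) = [2,2]"
  proof -
    fix xs assume h: "xs \<in> PL 5"
    show "map length (lvs (build 2 xs)) = [2,2]"
      using ns22[OF szinv_PL[OF h]] sum_ns_PL[OF h, of 2] by simp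
  qed
  have c: "card (PL 5) = 120" by (simp add: card_permutations_of_set fact_numeral)
  have "\<And>k. Ek k 5 = real (count_list [2,2::nat] k)"
  proof -
    fix k
    have "(\<Sum>xs\<in>PL 5. real (count_list (map length (lvs (build 2 xs))) k)) = (\<Sum>xs\<in>PL 5. real (count_list [2,2::nat] k))"
      by (rule sum.cong) (simp_all add: ns)
    then show "Ek k 5 = real (count_list [2,2::nat] k)" unfolding Ek_def using c by (simp add: fact_numeral)
  qed
  then show "Ek 2 5 = 2" "Ek 3 5 = 0" "Ek 4 5 = 0" by simp_all
qed



lemma q_identity:
  fixes x y j :: real
  assumes "j > 0"
  shows "6 * (x + (-9*x - 8*y)/j)^2 + 10 * (x + (-9*x - 8*y)/j) * (y + (3*x - 4*y)/j) + 16 * (y + (3*x - 4*y)/j)^2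
     = (1 - 13/j + 60/j^2) * (6*x^2 + 10*x*y + 16*y^2)"
  using assms by (simp add: field_simps power2_eq_square)

lemma bern13:
  fixes n :: real
  assumes "n \<ge> 8"
  shows "1 - 13/(n+1) + 60/(n+1)^2 \<le> ((n+10)/(n+11))^13"
proof -
  have "1 + real 13 * (-1/(n+11)) \<le> (1 + (-1/(n+11)))^13"
    by (rule Bernoulli_inequality) (use assms in \<open>simp add: field_simps\<close>)
  moreover have "1 + (-1/(n+11)) = (n+10)/(n+11)" using assms by (simp add: field_simps)
  moreover have "1 - 13/(n+1) + 60/(n+1)^2 \<le> 1 + real 13 * (-1/(n+11))"
  proof -
    have "60 * (n+11) \<le> 130 * (n+1)" using assms by simp
    then have h: "60*(n+11)*(n+1) \<le> 130*(n+1)*(n+1)" using assms by (intro mult_right_mono) auto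
    have p: "(n+1)^2 > 0" "(n+1)*(n+11) > 0" using assms by auto
    have "60/(n+1)^2 \<le> 130/((n+1)*(n+11)) \<longleftrightarrow> 60*((n+1)*(n+11)) \<le> 130*(n+1)^2"
      using p by (simp add: divide_simps)
    then have "60/(n+1)^2 \<le> 130/((n+1)*(n+11))" using h by (simp add: power2_eq_square algebra_simps)
    moreover have "13/(n+1) - 13/(n+11) = 130/((n+1)*(n+11))" using assms by (simp add: field_simps)
    ultimately show ?thesis by simp
  qed
  ultimately show ?thesis by simp
qed

lemma analytic:
  fixes a b c :: "nat \<Rightarrow> real"
  assumes rec: "\<And>n. n \<ge> 5 \<Longrightarrow> a (Suc n) = a n + (-3 * a n + 10 * c n) / real (Suc n) \<and>
                         b (Suc n) = b n + (3 * a n - 4 * b n) / real (Suc n) \<and>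
                         c (Suc n) = c n + (4 * b n - 5 * c n) / real (Suc n)"
    and init: "a 5 = 2" "b 5 = 0" "c 5 = 0"
    and fe: "\<And>n. n \<ge> 5 \<Longrightarrow> f n = a n + b n + c n"
  shows "(\<lambda>N. f N - 10 * (real N + 1) / 37) \<in> O(\<lambda>N. real N powr (-13/2))"
proof -
  define x where "x n = a n - 5 * (real n + 1) / 37" for n
  define y where "y n = b n - 3 * (real n + 1) / 37" for n
  define z where "z n = c n - 2 * (real n + 1) / 37" for n
  define q where "q n = 6 * (x n)^2 + 10 * x n * y n + 16 * (y n)^2" for n
  have S: "3 * a n + 4 * b n + 5 * c n = real n + 1" if "n \<ge> 5" for n
    using that
  proof (induction n rule: nat_induct_at_least)
    case base then show ?case using init by simp
  next
    case (Suc n)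
    define j where "j = real (Suc n)"
    have j0: "j \<noteq> 0" by (simp add: j_def)
    have gen: "3*(A + P/j) + 4*(B+Q/j) + 5*(C+R/j) = 3*A+4*B+5*C + (3*P+4*Q+5*R)/j" for A B C P Q R
      using j0 by (simp add: field_simps)
    have "3 * a (Suc n) + 4 * b (Suc n) + 5 * c (Suc n) = (3 * a n + 4 * b n + 5 * c n) +
        (3*(-3 * a n + 10 * c n) + 4*(3 * a n - 4 * b n) + 5*(4 * b n - 5 * c n))/j"
      using rec[OF Suc(1)] unfolding j_def[symmetric] by (simp only: gen)
    also have "\<dots> = (real n + 1) + (real n + 1)/j" using Suc(2) by (simp add: algebra_simps)
    also have "\<dots> = real (Suc n) + 1" using j0 by (simp add: j_def field_simps)
    finally show ?case .
  qed
  have z: "z n = - (3 * x n + 4 * y n) / 5" if "n \<ge> 5" for n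
    using S[OF that] unfolding x_def y_def z_def by (simp add: field_simps)
  have xs: "x (Suc n) = x n + (-9 * x n - 8 * y n) / real (Suc n)" if "n \<ge> 5" for n
  proof -
    have "x (Suc n) = x n + (-3 * x n + 10 * z n) / real (Suc n)"
      using rec[OF that] unfolding x_def z_def by (simp add: field_simps)
    then show ?thesis using z[OF that] by (simp add: field_simps)
  qed
  have ys: "y (Suc n) = y n + (3 * x n - 4 * y n) / real (Suc n)" if "n \<ge> 5" for n
    using rec[OF that] unfolding x_def y_def by (simp add: field_simps)
  have qs: "q (Suc n) = (1 - 13/real (Suc n) + 60/(real (Suc n))^2) * q n" if "n \<ge> 5" for n
    unfolding q_def xs[OF that] ys[OF that] by (rule q_identity) simp
  have qnn: "q n \<ge> 0" for n
  proof -
    have "q n = (2 * x n + y n)^2 + 2 * (x n + 3/2 * y n)^2 + (21/2) * (y n)^2"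
      unfolding q_def by (simp add: power2_eq_square algebra_simps)
    then show ?thesis by simp
  qed
  have sq: "(2 * x n + y n)^2 \<le> q n" for n
  proof -
    have "q n - (2 * x n + y n)^2 = 2 * (x n + 3/2 * y n)^2 + (21/2) * (y n)^2"
      unfolding q_def by (simp add: power2_eq_square algebra_simps)
    moreover have "0 \<le> 2 * (x n + 3/2 * y n)^2 + (21/2) * (y n)^2" by simp
    ultimately show ?thesis by linarith
  qed
  have mono: "q (Suc n) * (real n + 11)^13 \<le> q n * (real n + 10)^13" if "n \<ge> 8" for n
  proof -
    have b: "1 - 13/(real n+1) + 60/(real n+1)^2 \<le> ((real n+10)/(real n+11))^13"
      by (rule bern13) (use that in simp)
    have "q (Suc n) = (1 - 13/(real n+1) + 60/(real n+1)^2) * q n" using qs[of n] that by (simp add: add.commute)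
    also have "\<dots> \<le> ((real n+10)/(real n+11))^13 * q n" by (rule mult_right_mono[OF b qnn])
    finally have "q (Suc n) \<le> ((real n+10)/(real n+11))^13 * q n" .
    then have "q (Suc n) * (real n + 11)^13 \<le> ((real n+10)/(real n+11))^13 * q n * (real n + 11)^13"
      by (rule mult_right_mono) simp
    also have "\<dots> = q n * (real n + 10)^13"
    proof -
      have "(real n + 11)^13 \<noteq> 0" by simp
      then show ?thesis by (simp only: power_divide) (simp)
    qed
    finally show ?thesis .
  qed
  define K where "K = q 9 * (real 9 + 10)^13"
  have bnd: "q n * (real n + 10)^13 \<le> K" if "n \<ge> 9" for n
    using that
  proof (induction n rule: nat_induct_at_least)
    case base then show ?case by (simp add: K_def)
  next
    case (Suc n)
    have "q (Suc n) * (real (Suc n) + 10)^13 = q (Suc n) * (real n + 11)^13" by (simp add: add.commute)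
    also have "\<dots> \<le> q n * (real n + 10)^13" using mono Suc(1) by simp
    finally show ?case using Suc(2) by simp
  qed
  have K0: "K \<ge> 0" unfolding K_def using qnn by simp
  have main: "\<bar>a n + b n + c n - 10 * (real n + 1) / 37\<bar> \<le> sqrt K * \<bar>real n powr (-13/2)\<bar>" if "n \<ge> 9" for n
  proof -
    have n0: "real n > 0" using that by simp
    have e: "a n + b n + c n - 10 * (real n + 1) / 37 = (2 * x n + y n) / 5"
      using z[of n] that unfolding x_def y_def z_def by (simp add: field_simps)
    have t2: "(real n powr (-13/2))^2 = 1 / (real n)^13"
    proof -
      have "(real n powr (-13/2))^2 = real n powr (-13/2) * real n powr (-13/2)" by (simp add: power2_eq_square)
      also have "\<dots> = real n powr (-13)" by (simp add: powr_add[symmetric])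
      also have "\<dots> = 1 / real n powr 13" by (simp add: powr_minus divide_inverse)
      also have "\<dots> = 1 / (real n)^13" using n0 by simp
      finally show ?thesis .
    qed
    have "q n \<le> K / (real n + 10)^13" using bnd[OF that] by (simp add: field_simps)
    also have "\<dots> \<le> K / (real n)^13"
      by (rule divide_left_mono) (use K0 n0 in \<open>auto intro: power_mono\<close>)
    finally have qK: "q n \<le> K / (real n)^13" .
    have "(a n + b n + c n - 10 * (real n + 1) / 37)^2 = (2 * x n + y n)^2 / 25"
      unfolding e by (simp add: power_divide)
    also have "\<dots> \<le> (2 * x n + y n)^2" by simp
    also have "\<dots> \<le> q n" by (rule sq)
    also have "\<dots> \<le> K / (real n)^13" by (rule qK)
    also have "\<dots> = K * (real n powr (-13/2))^2" unfolding t2 by simp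
    also have "\<dots> = (sqrt K * \<bar>real n powr (-13/2)\<bar>)^2"
      using K0 by (simp add: power_mult_distrib)
    finally have "\<bar>a n + b n + c n - 10 * (real n + 1) / 37\<bar>^2 \<le> (sqrt K * \<bar>real n powr (-13/2)\<bar>)^2"
      by simp
    then show ?thesis by (rule power2_le_imp_le) (use K0 in simp)
  qed
  show ?thesis
  proof (rule bigoI[where c = "sqrt K"])
    show "eventually (\<lambda>n. norm (f n - 10 * (real n + 1) / 37) \<le> sqrt K * norm (real n powr (-13/2))) at_top"
      using main fe by (auto simp: eventually_at_top_linorder intro!: exI[of _ 9])
  qed
qed



lemma sum_permutes_PL:
  "(\<Sum>\<pi>\<in>{\<pi>. \<pi> permutes {1..N}}. g (map \<pi> [1..<N+1])) = (\<Sum>xs\<in>PL N. g xs)"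
proof -
  let ?h = "\<lambda>\<pi>. map \<pi> [1..<N+1]"
  let ?P = "{\<pi>. \<pi> permutes {1..N}}"
  have inj: "inj_on ?h ?P"
  proof (rule inj_onI)
    fix \<pi> \<sigma> assume p: "\<pi> \<in> ?P" "\<sigma> \<in> ?P" and e: "?h \<pi> = ?h \<sigma>"
    have "\<forall>i\<in>{1..N}. \<pi> i = \<sigma> i" using e by (auto simp: map_eq_conv)
    then show "\<pi> = \<sigma>" using p by (metis mem_Collect_eq permutes_not_in ext)
  qed
  have sub: "?h ` ?P \<subseteq> PL N"
  proof
    fix ys assume "ys \<in> ?h ` ?P"
    then obtain \<pi> where p: "\<pi> permutes {1..N}" "ys = ?h \<pi>" by auto
    have "set [1..<N+1] = {1..N}" by (auto simp del: upt_Suc)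
    then have "set ys = {1..N}" using p(2) permutes_image[OF p(1)] by (simp del: upt_Suc)
    moreover have "distinct ys" using p permutes_inj_on[OF p(1)] by (simp add: distinct_map)
    ultimately show "ys \<in> PL N" by (auto simp: permutations_of_set_def)
  qed
  have "card (?h ` ?P) = fact N" using card_image[OF inj] card_permutations[of "{1..N}" N] by simp
  moreover have "card (PL N) = fact N" by (simp add: card_permutations_of_set)
  ultimately have eq: "?h ` ?P = PL N" using sub by (intro card_subset_eq) auto
  have "(\<Sum>xs\<in>PL N. g xs) = (\<Sum>\<pi>\<in>?P. g (?h \<pi>))"
    unfolding eq[symmetric] using sum.reindex[OF inj, of g] by (simp del: upt_Suc add: o_def)
  then show ?thesis by simp
qed

lemma gk_vals: "gk 2 2 = -3" "gk 2 3 = 0" "gk 2 4 = 10" "gk 3 2 = 3" "gk 3 3 = -4" "gk 3 4 = 0"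
  "gk 4 2 = 0" "gk 4 3 = 4" "gk 4 4 = -5"
  by (simp_all add: gk_def)

lemma EL_eq: "5 \<le> N \<Longrightarrow> expected_leaves 2 N = Ek 2 N + Ek 3 N + Ek 4 N"
proof -
  assume N: "5 \<le> N"
  have "expected_leaves 2 N = (\<Sum>xs\<in>PL N. real (length (lvs (build 2 xs)))) / fact N"
    unfolding expected_leaves_def leaves_lvs
    using sum_permutes_PL[of "\<lambda>xs. real (length (lvs (build 2 xs)))" N] by simp
  also have "(\<Sum>xs\<in>PL N. real (length (lvs (build 2 xs)))) =
     (\<Sum>xs\<in>PL N. real (count_list (map length (lvs (build 2 xs))) 2) + real (count_list (map length (lvs (build 2 xs))) 3)
        + real (count_list (map length (lvs (build 2 xs))) 4))"
  proof (rule sum.cong[OF refl])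
    fix xs assume h: "xs \<in> PL N"
    have "\<forall>n\<in>set (map length (lvs (build 2 xs))). n = 2 \<or> n = 3 \<or> n = 4"
      using szinv_234[OF szinv_PL[OF h] _ N] sum_ns_PL[OF h] by simp
    from length_234[OF this] show "real (length (lvs (build 2 xs))) = real (count_list (map length (lvs (build 2 xs))) 2) + real (count_list (map length (lvs (build 2 xs))) 3)
        + real (count_list (map length (lvs (build 2 xs))) 4)" by simp
  qed
  finally show ?thesis unfolding Ek_def by (simp add: sum.distrib add_divide_distrib)
qed

theorem mainTheorem11:
  shows "(\<lambda>N. expected_leaves 2 N - 10 * (real N + 1) / 37) \<in> O(\<lambda>N. real N powr (-13/2))"
proof (rule analytic[where a = "Ek 2" and b = "Ek 3" and c = "Ek 4"])
  fix n :: nat assume n: "n \<ge> 5"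
  show "Ek 2 (Suc n) = Ek 2 n + (- 3 * Ek 2 n + 10 * Ek 4 n) / real (Suc n) \<and>
        Ek 3 (Suc n) = Ek 3 n + (3 * Ek 2 n - 4 * Ek 3 n) / real (Suc n) \<and>
        Ek 4 (Suc n) = Ek 4 n + (4 * Ek 3 n - 5 * Ek 4 n) / real (Suc n)"
    using Ek_rec[OF n, of 2] Ek_rec[OF n, of 3] Ek_rec[OF n, of 4] by (simp add: gk_vals)
next
  show "Ek 2 5 = 2" "Ek 3 5 = 0" "Ek 4 5 = 0" by (rule Ek5)+
next
  fix n :: nat assume "n \<ge> 5" then show "expected_leaves 2 n = Ek 2 n + Ek 3 n + Ek 4 n" by (rule EL_eq)
qed


end
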